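(* Let $V:\mathbb{Z}^d\to\mathbb{R}^+\cup\{+\infty\}$ be a strictly convex potential with $V(\vec0)=0$. If $\rho(V,\alpha)<\rho_0$, then $\beta(V,\alpha)<1$. In particular, $$\alpha^*(V)\le\inf\{\alpha>0:\rho(V,\alpha)\le\rho_0\}.$$
   Context: $\rho(V,\alpha)=\sum_{x\in\mathbb{Z}^d\setminus\{\vec0\}}e^{-\alpha V(x)}$; $\rho_0\approx0.44504$ is the unique solution $r\in[0,1]$ of $\frac{r}{(1-r)^2}-r=1$. $\Gamma$ is the set of finite cycles of $\mathbb{Z}^d$ (a cycle of length $|\gamma|=n\ge2$ on distinct sites $x_1,\dots,x_n$ maps $x_i\mapsto x_{i+1}$ mod $n$ and fixes other sites; support $\{\gamma\}$); $w(\gamma)=\exp\{-\alpha\sum_{x\in\{\gamma\}}V(\gamma(x)-x)\}$; $\beta(V,\alpha)=\sum_{\gamma\in\Gamma,\vec0\in\{\gamma\}}|\gamma|w(\gamma)$; $\alpha^*(V)=\inf\{\alpha:\beta(V,\alpha)<1\}$ (and $\alpha^*=\infty$ if $\beta(V,\alpha)=\infty$ for all $\alpha$). *)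

theory Defs
  imports "HOL-Analysis.Analysis" "HOL-Library.Extended_Nonnegative_Real"
begin

text \<open>Lattice Z^d is modelled as int^'d (d = CARD('d)); potentials take values in [0,+oo] (ennreal).\<close>

definition lat_real :: "int^'d \<Rightarrow> real^'d" where
  "lat_real x = (\<chi> i. real_of_int (x $ i))"

definition strictly_convex_pot :: "(int^'d \<Rightarrow> ennreal) \<Rightarrow> bool" where
  "strictly_convex_pot V \<longleftrightarrow>
     (\<forall>x y z. \<forall>t::real. x \<noteq> y \<and> 0 < t \<and> t < 1 \<and>
        lat_real z = t *\<^sub>R lat_real x + (1 - t) *\<^sub>R lat_real y \<longrightarrow>
          V z \<le> ennreal t * V x + ennreal (1 - t) * V y \<and>
          (V x < \<infinity> \<and> V y < \<infinity> \<longrightarrow> V z < ennreal t * V x + ennreal (1 - t) * V y))"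

definition expw :: "real \<Rightarrow> ennreal \<Rightarrow> real" where
  "expw \<alpha> v = (if v = \<infinity> then 0 else exp (- \<alpha> * enn2real v))"

definition rho :: "(int^'d \<Rightarrow> ennreal) \<Rightarrow> real \<Rightarrow> ennreal" where
  "rho V \<alpha> = (\<Sum>\<^sub>\<infinity> x \<in> - {0}. ennreal (expw \<alpha> (V x)))"

definition rho0 :: real where
  "rho0 = (THE r. 0 \<le> r \<and> r \<le> 1 \<and> r / (1 - r)^2 - r = 1)"

text \<open>The cycle on the distinct sites xs = [x_1,...,x_n]: x_i maps to x_{i+1 mod n}, others fixed.\<close>
definition cyc :: "'a list \<Rightarrow> 'a \<Rightarrow> 'a" where
  "cyc xs x = (if x \<in> set xs
      then xs ! ((Suc (THE i. i < length xs \<and> xs ! i = x)) mod length xs) else x)"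

definition cycles :: "(int^'d \<Rightarrow> int^'d) set" where
  "cycles = {\<gamma>. \<exists>xs. distinct xs \<and> 2 \<le> length xs \<and> \<gamma> = cyc xs}"

definition supp :: "('a \<Rightarrow> 'a) \<Rightarrow> 'a set" where
  "supp \<gamma> = {x. \<gamma> x \<noteq> x}"

definition cyc_weight :: "(int^'d \<Rightarrow> ennreal) \<Rightarrow> real \<Rightarrow> (int^'d \<Rightarrow> int^'d) \<Rightarrow> real" where
  "cyc_weight V \<alpha> \<gamma> = (\<Prod>x\<in>supp \<gamma>. expw \<alpha> (V (\<gamma> x - x)))"

definition beta :: "(int^'d \<Rightarrow> ennreal) \<Rightarrow> real \<Rightarrow> ennreal" where
  "beta V \<alpha> = (\<Sum>\<^sub>\<infinity> \<gamma> \<in> {\<gamma> \<in> cycles. 0 \<in> supp \<gamma>}.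
                   ennreal (real (card (supp \<gamma>)) * cyc_weight V \<alpha> \<gamma>))"

text \<open>alpha*(V) = inf{alpha > 0 : beta(V,alpha) < 1}, = +oo if the set is empty.\<close>
definition alpha_star :: "(int^'d \<Rightarrow> ennreal) \<Rightarrow> ereal" where
  "alpha_star V = Inf (ereal ` {\<alpha>. 0 < \<alpha> \<and> beta V \<alpha> < 1})"

end

theory Submission
  imports Defs "HOL-Library.FuncSet"
begin



lemma modinj: assumes "(k+i) mod (n::nat) = (k+j) mod n" "i < n" "j < n" shows "i = j"
proof -
  have *: "i \<le> j \<Longrightarrow> (k+i) mod n = (k+j) mod n \<Longrightarrow> j < n \<Longrightarrow> i = j" for i j
  proof -
    assume a: "i \<le> j" "(k+i) mod n = (k+j) mod n" "j < n"
    hence "n dvd (k+j) - (k+i)" using mod_eq_dvd_iff_nat[of "k+i" "k+j" n] by auto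
    hence "n dvd j - i" by simp
    moreover have "j - i < n" using a by simp
    ultimately show "i = j" using a by (metis diff_is_0_eq dvd_imp_le le_antisym not_le zero_less_iff_neq_zero)
  qed
  show ?thesis using *[of i j] *[of j i] assms by (cases "i \<le> j") auto
qed

lemma cyc_nth:
  assumes "distinct xs" "k < length xs"
  shows "cyc xs (xs!k) = xs!(Suc k mod length xs)"
proof -
  have "(THE i. i < length xs \<and> xs ! i = xs!k) = k"
    using assms by (intro the_equality) (auto simp: nth_eq_iff_index_eq)
  thus ?thesis using assms by (simp add: cyc_def)
qed

lemma cyc_pow:
  assumes "distinct xs" "k < length xs"
  shows "(cyc xs ^^ i) (xs!k) = xs!((k+i) mod length xs)"
proof (induction i)
  case 0 then show ?case using assms by simp
next
  case (Suc i)
  have "(cyc xs ^^ Suc i) (xs!k) = cyc xs (xs!((k+i) mod length xs))" using Suc by simp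
  also have "\<dots> = xs!(Suc ((k+i) mod length xs) mod length xs)"
    using assms by (intro cyc_nth) (auto intro!: mod_less_divisor)
  also have "\<dots> = xs!((k + Suc i) mod length xs)" by (simp add: mod_Suc_eq)
  finally show ?case .
qed

lemma supp_cyc:
  assumes "distinct xs" "2 \<le> length xs"
  shows "supp (cyc xs) = set xs"
proof
  show "supp (cyc xs) \<subseteq> set xs" by (auto simp: supp_def cyc_def)
next
  show "set xs \<subseteq> supp (cyc xs)"
  proof
    fix x assume "x \<in> set xs"
    then obtain k where k: "k < length xs" "x = xs!k" by (auto simp: in_set_conv_nth)
    have "Suc k mod length xs \<noteq> k"
    proof (cases "Suc k < length xs")
      case True then show ?thesis by simp
    next
      case False then have "Suc k = length xs" using k by simp
      then show ?thesis using assms by simp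
    qed
    moreover have "Suc k mod length xs < length xs" using k by (intro mod_less_divisor) auto
    ultimately have "xs!(Suc k mod length xs) \<noteq> xs!k" using assms k by (simp add: nth_eq_iff_index_eq)
    thus "x \<in> supp (cyc xs)" using cyc_nth[OF assms(1) k(1)] k by (simp add: supp_def)
  qed
qed

definition orb :: "('a \<Rightarrow> 'a) \<Rightarrow> 'a \<Rightarrow> nat \<Rightarrow> 'a" where
  "orb g a i = (g ^^ i) a"

lemma cycles_orbit:
  assumes "\<gamma> \<in> cycles" "(0::int^'d) \<in> supp \<gamma>"
  shows "finite (supp \<gamma>) \<and> 2 \<le> card (supp \<gamma>) \<and> bij_betw (orb \<gamma> 0) {..<card (supp \<gamma>)} (supp \<gamma>)"
proof -
  obtain xs where xs: "distinct xs" "2 \<le> length xs" "\<gamma> = cyc xs"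
    using assms(1) by (auto simp: cycles_def)
  have s: "supp \<gamma> = set xs" using supp_cyc xs by simp
  have c: "card (supp \<gamma>) = length xs" using s xs by (simp add: distinct_card)
  obtain k where k: "k < length xs" "xs!k = 0" using assms(2) s by (auto simp: in_set_conv_nth)
  let ?n = "length xs"
  have o: "orb \<gamma> 0 i = xs!((k+i) mod ?n)" for i
    using cyc_pow[OF xs(1) k(1), of i] k xs by (simp add: orb_def)
  have inj: "inj_on (orb \<gamma> 0) {..<?n}"
  proof
    fix i j assume ij: "i \<in> {..<?n}" "j \<in> {..<?n}" "orb \<gamma> 0 i = orb \<gamma> 0 j"
    moreover have "(k+i) mod ?n < ?n" "(k+j) mod ?n < ?n" using k by (auto intro!: mod_less_divisor)
    ultimately have "(k+i) mod ?n = (k+j) mod ?n" using o xs by (simp add: nth_eq_iff_index_eq)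
    thus "i = j" using ij by (intro modinj[of k i ?n j]) auto
  qed
  have sub: "orb \<gamma> 0 ` {..<?n} \<subseteq> supp \<gamma>"
  proof
    fix y assume "y \<in> orb \<gamma> 0 ` {..<?n}"
    then obtain i where "y = xs!((k+i) mod ?n)" using o by auto
    moreover have "(k+i) mod ?n < ?n" using k by (intro mod_less_divisor) auto
    ultimately show "y \<in> supp \<gamma>" using s by simp
  qed
  have "orb \<gamma> 0 ` {..<?n} = supp \<gamma>"
    using sub inj by (metis c card_image card_lessThan card_subset_eq finite_set s)
  thus ?thesis using inj c s xs by (simp add: bij_betw_def)
qed



lemma fmono:
  fixes a b :: real
  assumes "0 \<le> a" "a < b" "b < 1"
  shows "a/(1-a)^2 - a < b/(1-b)^2 - b"
proof -
  have pa: "0 < 1 - a" "0 < 1 - b" using assms by auto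
  have d: "b/(1-b)^2 - a/(1-a)^2 = (b-a)*(1-a*b)/((1-a)^2*(1-b)^2)"
  proof -
    have "b/(1-b)^2 - a/(1-a)^2 = (b*(1-a)^2 - a*(1-b)^2)/((1-a)^2*(1-b)^2)"
      using pa by (simp add: diff_divide_distrib)
    also have "b*(1-a)^2 - a*(1-b)^2 = (b-a)*(1-a*b)"
      by (simp add: power2_eq_square algebra_simps)
    finally show ?thesis .
  qed
  have "0 < a*(1-b) + b*(1-a)" using assms by (smt (verit) mult_nonneg_nonneg mult_pos_pos)
  hence lt: "(1-a)*(1-b) < 1 - a*b" by (simp add: algebra_simps)
  have "0 < (1-a)*(1-b)" using pa by simp
  moreover have "(1-a)*(1-b) \<le> 1" using assms pa by (simp add: mult_le_one)
  ultimately have "((1-a)*(1-b))^2 \<le> (1-a)*(1-b)" unfolding power2_eq_square by (simp add: mult_le_cancel_left1 mult_left_le)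
  hence "((1-a)*(1-b))^2 < 1 - a*b" using lt by linarith
  hence "1 < (1-a*b)/((1-a)^2*(1-b)^2)" using pa by (simp add: power_mult_distrib)
  hence "(b-a) * 1 < (b-a) * ((1-a*b)/((1-a)^2*(1-b)^2))" using assms by (intro mult_strict_left_mono) auto
  thus ?thesis using d by simp
qed
definition fS :: "real \<Rightarrow> real" where "fS r = r/(1-r)^2 - r"

lemma rho0_props: "0 < rho0 \<and> rho0 < 1/2 \<and> fS rho0 = 1"
proof -
  have cont: "continuous_on {0..1/2} fS"
    unfolding fS_def by (intro continuous_intros) auto
  have f0: "fS 0 = 0" by (simp add: fS_def)
  have fh: "fS (1/2) = 3/2" by (simp add: fS_def power2_eq_square)
  have f1: "fS 1 = -1" by (simp add: fS_def)
  obtain r where r: "0 \<le> r" "r \<le> 1/2" "fS r = 1"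
    using IVT'[of fS 0 1 "1/2", OF _ _ _ cont] f0 fh by force
  have uniq: "s = r" if s: "0 \<le> s" "s \<le> 1" "fS s = 1" for s
  proof -
    have "s \<noteq> 1" using s f1 by auto
    hence s1: "s < 1" using s by simp
    show ?thesis
    proof (rule ccontr)
      assume "s \<noteq> r"
      then consider "s < r" | "r < s" by linarith
      thus False
      proof cases
        case 1 thus False using fmono[of s r] s r unfolding fS_def by simp
      next
        case 2 thus False using fmono[of r s] s1 s r unfolding fS_def by simp
      qed
    qed
  qed
  have "(THE r. 0 \<le> r \<and> r \<le> 1 \<and> r / (1 - r)^2 - r = 1) = r"
  proof (rule the_equality)
    show "0 \<le> r \<and> r \<le> 1 \<and> r / (1 - r)^2 - r = 1" using r by (simp add: fS_def)
  next
    fix s :: real assume "0 \<le> s \<and> s \<le> 1 \<and> s / (1 - s)^2 - s = 1"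
    thus "s = r" using uniq by (simp add: fS_def)
  qed
  hence e: "rho0 = r" by (simp add: rho0_def)
  have "r \<noteq> 0" using r f0 by auto
  moreover have "r \<noteq> 1/2"
  proof
    assume h: "r = 1/2"
    have "fS (1/2) = 1" using r(3) unfolding h .
    thus False using fh by simp
  qed
  ultimately show ?thesis using r e by simp
qed

lemma Tclosed:
  fixes r :: real assumes "r \<noteq> 1"
  shows "(\<Sum>n<N. real n * r^n) = (r - real N * r^N + (real N - 1) * r^(N+1))/(1-r)^2"
proof (induction N)
  case 0 then show ?case by simp
next
  case (Suc N)
  have nz: "(1-r)^2 \<noteq> 0" using assms by simp
  have "(\<Sum>n<Suc N. real n * r^n) = (r - real N * r^N + (real N - 1) * r^(N+1))/(1-r)^2 + real N * r^N"
    using Suc by simp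
  also have "\<dots> = (r - real N * r^N + (real N - 1) * r^(N+1) + real N * r^N * (1-r)^2)/(1-r)^2"
    using nz by (simp only: add_divide_distrib) simp
  also have "r - real N * r^N + (real N - 1) * r^(N+1) + real N * r^N * (1-r)^2
       = r - real (Suc N) * r^(Suc N) + (real (Suc N) - 1) * r^(Suc N+1)"
    by (simp add: power2_eq_square algebra_simps)
  finally show ?case .
qed

lemma partial_bound:
  fixes r :: real assumes "0 \<le> r" "r < 1"
  shows "(\<Sum>n\<in>{2..<N}. real n * r^n) \<le> fS r"
proof -
  have pos: "0 < (1-r)^2" using assms by simp
  have T: "(\<Sum>n<N. real n * r^n) \<le> r/(1-r)^2"
  proof -
    have "r^(N+1) \<le> r^N" using assms by (simp add: mult_left_le_one_le)
    hence "(real N - 1) * r^(N+1) \<le> real N * r^N"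
      using assms by (intro mult_mono) auto
    hence "r - real N * r^N + (real N - 1) * r^(N+1) \<le> r" by simp
    hence "(r - real N * r^N + (real N - 1) * r^(N+1))/(1-r)^2 \<le> r/(1-r)^2"
      using pos by (intro divide_right_mono) auto
    thus ?thesis using Tclosed[of r N] assms by simp
  qed
  show ?thesis
  proof (cases "N \<le> 2")
    case True
    have "r * 1 \<le> r * (1/(1-r)^2)"
    proof (rule mult_left_mono)
      have "(1-r)^2 \<le> 1" using assms unfolding power2_eq_square by (intro mult_le_one) auto
      thus "1 \<le> 1/(1-r)^2" using pos by simp
    qed (use assms in simp)
    thus ?thesis using True by (simp add: fS_def)
  next
    case False
    have split: "{..<N} = {0,1} \<union> {2..<N}" using False by auto
    have "(\<Sum>n<N. real n * r^n) = r + (\<Sum>n\<in>{2..<N}. real n * r^n)"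
      unfolding split by (subst sum.union_disjoint) auto
    thus ?thesis using T by (simp add: fS_def)
  qed
qed




lemma orb_Suc: "orb g a (Suc i) = g (orb g a i)" by (simp add: orb_def)
lemma orb_0: "orb g a 0 = a" by (simp add: orb_def)

definition C0 :: "(int^'d \<Rightarrow> int^'d) set" where
  "C0 = {\<gamma> \<in> cycles. 0 \<in> supp \<gamma>}"

definition J :: "(int^'d \<Rightarrow> int^'d) \<Rightarrow> nat \<Rightarrow> int^'d" where
  "J \<gamma> = (\<lambda>i\<in>{..<card (supp \<gamma>)}. orb \<gamma> 0 (Suc i) - orb \<gamma> 0 i)"

lemma C0_orbit:
  assumes "\<gamma> \<in> C0"
  shows "finite (supp \<gamma>) \<and> 2 \<le> card (supp \<gamma>) \<and> bij_betw (orb \<gamma> 0) {..<card (supp \<gamma>)} (supp \<gamma>)"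
  using assms cycles_orbit by (auto simp: C0_def)

lemma phi_inj:
  assumes g: "\<gamma> \<in> C0" and g': "\<gamma>' \<in> C0"
    and c: "card (supp \<gamma>) = card (supp \<gamma>')" and j: "J \<gamma> = J \<gamma>'"
  shows "\<gamma> = \<gamma>'"
proof -
  define n where "n = card (supp \<gamma>)"
  have b: "bij_betw (orb \<gamma> 0) {..<n} (supp \<gamma>)" using C0_orbit[OF g] n_def by simp
  have b': "bij_betw (orb \<gamma>' 0) {..<n} (supp \<gamma>')" using C0_orbit[OF g'] n_def c by simp
  have d: "orb \<gamma> 0 (Suc i) - orb \<gamma> 0 i = orb \<gamma>' 0 (Suc i) - orb \<gamma>' 0 i" if "i < n" for i
  proof -
    have "J \<gamma> i = J \<gamma>' i" using j by simp
    thus ?thesis using that c n_def by (simp add: J_def)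
  qed
  have eq: "i < n \<Longrightarrow> orb \<gamma> 0 i = orb \<gamma>' 0 i" for i
  proof (induction i)
    case 0 show ?case by (simp add: orb_0)
  next
    case (Suc i)
    hence "i < n" by simp
    have "orb \<gamma> 0 (Suc i) = orb \<gamma> 0 i + (orb \<gamma> 0 (Suc i) - orb \<gamma> 0 i)" by simp
    also have "\<dots> = orb \<gamma>' 0 i + (orb \<gamma>' 0 (Suc i) - orb \<gamma>' 0 i)"
      using Suc.IH[OF \<open>i < n\<close>] d[OF \<open>i < n\<close>] by simp
    also have "\<dots> = orb \<gamma>' 0 (Suc i)" by simp
    finally show ?case .
  qed
  have s: "supp \<gamma> = supp \<gamma>'"
  proof -
    have "supp \<gamma> = orb \<gamma> 0 ` {..<n}" using b by (simp add: bij_betw_def)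
    also have "\<dots> = orb \<gamma>' 0 ` {..<n}" using eq by (intro image_cong) auto
    also have "\<dots> = supp \<gamma>'" using b' by (simp add: bij_betw_def)
    finally show ?thesis .
  qed
  show ?thesis
  proof
    fix x
    show "\<gamma> x = \<gamma>' x"
    proof (cases "x \<in> supp \<gamma>")
      case True
      then obtain i where i: "i < n" "x = orb \<gamma> 0 i" using b by (auto simp: bij_betw_def)
      have "\<gamma> x = orb \<gamma> 0 (Suc i)" using i by (simp add: orb_Suc)
      also have "\<dots> = orb \<gamma> 0 i + (orb \<gamma> 0 (Suc i) - orb \<gamma> 0 i)" by simp
      also have "\<dots> = orb \<gamma>' 0 i + (orb \<gamma>' 0 (Suc i) - orb \<gamma>' 0 i)"
        using eq[OF i(1)] d[OF i(1)] by simp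
      also have "\<dots> = \<gamma>' x" using i eq by (simp add: orb_Suc)
      finally show ?thesis .
    next
      case False
      hence "x \<notin> supp \<gamma>'" using s by simp
      thus ?thesis using False by (simp add: supp_def)
    qed
  qed
qed

lemma weight_eq:
  assumes g: "\<gamma> \<in> C0"
  shows "cyc_weight V \<alpha> \<gamma> = (\<Prod>i<card (supp \<gamma>). expw \<alpha> (V (J \<gamma> i)))"
proof -
  define n where "n = card (supp \<gamma>)"
  have b: "bij_betw (orb \<gamma> 0) {..<n} (supp \<gamma>)" using C0_orbit[OF g] n_def by simp
  have "cyc_weight V \<alpha> \<gamma> = (\<Prod>i<n. expw \<alpha> (V (\<gamma> (orb \<gamma> 0 i) - orb \<gamma> 0 i)))"
    unfolding cyc_weight_def using prod.reindex_bij_betw[OF b, of "\<lambda>x. expw \<alpha> (V (\<gamma> x - x))"]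
    by simp
  also have "\<dots> = (\<Prod>i<n. expw \<alpha> (V (J \<gamma> i)))"
    by (intro prod.cong) (auto simp: J_def n_def orb_Suc)
  finally show ?thesis using n_def by simp
qed

lemma J_nz:
  assumes g: "\<gamma> \<in> C0" "i < card (supp \<gamma>)"
  shows "J \<gamma> i \<noteq> 0"
proof -
  have b: "bij_betw (orb \<gamma> 0) {..<card (supp \<gamma>)} (supp \<gamma>)" using C0_orbit[OF g(1)] by simp
  have "orb \<gamma> 0 i \<in> supp \<gamma>" using b g(2) by (auto simp: bij_betw_def)
  hence "\<gamma> (orb \<gamma> 0 i) \<noteq> orb \<gamma> 0 i" by (simp add: supp_def)
  thus ?thesis using g(2) by (simp add: J_def orb_Suc)
qed




lemma finite_bound:
  fixes g :: "int^'d \<Rightarrow> real" and r :: real and F :: "(int^'d \<Rightarrow> int^'d) set"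
  assumes gnn: "\<And>y. 0 \<le> g y"
    and gG: "\<And>G. finite G \<Longrightarrow> G \<subseteq> -{0} \<Longrightarrow> sum g G \<le> r"
    and r1: "r < 1"
    and F: "finite F" "F \<subseteq> C0"
  shows "(\<Sum>\<gamma>\<in>F. real (card (supp \<gamma>)) * (\<Prod>i<card (supp \<gamma>). g (J \<gamma> i))) \<le> fS r"
proof -
  have r0: "0 \<le> r" using gG[of "{}"] by simp
  define N where "N = Suc (\<Sum>\<gamma>\<in>F. card (supp \<gamma>))"
  define G where "G = (\<Union>\<gamma>\<in>F. J \<gamma> ` {..<card (supp \<gamma>)})"
  define S where "S = Sigma {2..<N} (\<lambda>n. PiE {..<n} (\<lambda>_. G))"
  define \<Phi> where "\<Phi> = (\<lambda>\<gamma>::int^'d \<Rightarrow> int^'d. (card (supp \<gamma>), J \<gamma>))"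
  define H where "H = (\<lambda>p::nat \<times> (nat \<Rightarrow> int^'d). real (fst p) * (\<Prod>i<fst p. g (snd p i)))"
  have Gfin: "finite G" unfolding G_def using F by auto
  have Gsub: "G \<subseteq> -{0}" unfolding G_def using F J_nz by fastforce
  have Sfin: "finite S" unfolding S_def using Gfin by (intro finite_SigmaI finite_PiE) auto
  have Hnn: "0 \<le> H p" for p unfolding H_def using gnn by (simp add: prod_nonneg)
  have inj: "inj_on \<Phi> F"
  proof
    fix a b assume "a \<in> F" "b \<in> F" "\<Phi> a = \<Phi> b"
    thus "a = b" using F phi_inj[of a b] by (auto simp: \<Phi>_def)
  qed
  have sub: "\<Phi> ` F \<subseteq> S"
  proof
    fix p assume "p \<in> \<Phi> ` F"
    then obtain \<gamma> where \<gamma>: "\<gamma> \<in> F" "p = \<Phi> \<gamma>" by auto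
    have c2: "2 \<le> card (supp \<gamma>)" using C0_orbit \<gamma> F by blast
    have "card (supp \<gamma>) \<le> (\<Sum>\<gamma>\<in>F. card (supp \<gamma>))" using \<gamma> F by (intro member_le_sum) auto
    hence cN: "card (supp \<gamma>) < N" by (simp add: N_def)
    have "J \<gamma> \<in> PiE {..<card (supp \<gamma>)} (\<lambda>_. G)"
      unfolding J_def restrict_PiE_iff
    proof
      fix i assume "i \<in> {..<card (supp \<gamma>)}"
      hence "J \<gamma> i \<in> G" unfolding G_def using \<gamma> by blast
      thus "orb \<gamma> 0 (Suc i) - orb \<gamma> 0 i \<in> G" using \<open>i \<in> _\<close> by (simp add: J_def)
    qed
    thus "p \<in> S" using c2 cN \<gamma> by (simp add: S_def \<Phi>_def)
  qed
  have "(\<Sum>\<gamma>\<in>F. real (card (supp \<gamma>)) * (\<Prod>i<card (supp \<gamma>). g (J \<gamma> i))) = (\<Sum>\<gamma>\<in>F. H (\<Phi> \<gamma>))"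
    by (simp add: H_def \<Phi>_def)
  also have "\<dots> = (\<Sum>p\<in>\<Phi> ` F. H p)" using sum.reindex[OF inj, of H] by simp
  also have "\<dots> \<le> (\<Sum>p\<in>S. H p)" using Sfin sub Hnn by (intro sum_mono2) auto
  also have "\<dots> = (\<Sum>n\<in>{2..<N}. \<Sum>j\<in>PiE {..<n} (\<lambda>_. G). H (n, j))"
    unfolding S_def using Gfin by (subst sum.Sigma) (auto intro!: finite_PiE)
  also have "\<dots> = (\<Sum>n\<in>{2..<N}. real n * (sum g G)^n)"
  proof (rule sum.cong)
    fix n assume "n \<in> {2..<N}"
    have "(\<Sum>j\<in>PiE {..<n} (\<lambda>_. G). H (n, j)) = real n * (\<Sum>j\<in>PiE {..<n} (\<lambda>_. G). \<Prod>i<n. g (j i))"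
      by (simp add: H_def sum_distrib_left)
    also have "(\<Sum>j\<in>PiE {..<n} (\<lambda>_. G). \<Prod>i<n. g (j i)) = (\<Prod>i<n. \<Sum>y\<in>G. g y)"
      using prod_sum_PiE[of "{..<n}" "\<lambda>_. G" "\<lambda>_ y. g y"] Gfin by simp
    also have "\<dots> = (sum g G)^n" by simp
    finally show "(\<Sum>j\<in>PiE {..<n} (\<lambda>_. G). H (n, j)) = real n * (sum g G)^n" .
  qed simp
  also have "\<dots> \<le> (\<Sum>n\<in>{2..<N}. real n * r^n)"
  proof (rule sum_mono)
    fix n
    have "0 \<le> sum g G" using gnn by (simp add: sum_nonneg)
    hence "(sum g G)^n \<le> r^n" using gG[OF Gfin Gsub] by (intro power_mono) auto
    thus "real n * (sum g G)^n \<le> real n * r^n" by (intro mult_left_mono) auto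
  qed
  also have "\<dots> \<le> fS r" using partial_bound r0 r1 by blast
  finally show ?thesis .
qed




lemma expw_nn: "0 \<le> expw \<alpha> v" by (simp add: expw_def)

lemma expw_mono:
  assumes "\<alpha> \<le> \<alpha>'" shows "expw \<alpha>' v \<le> expw \<alpha> v"
proof -
  have "0 \<le> enn2real v" by simp
  hence "- \<alpha>' * enn2real v \<le> - \<alpha> * enn2real v" using assms by (simp add: mult_right_mono)
  thus ?thesis by (simp add: expw_def)
qed

lemma expw_strict:
  assumes "\<alpha> < \<alpha>'" "v \<noteq> \<infinity>" "v \<noteq> 0" shows "expw \<alpha>' v < expw \<alpha> v"
proof -
  have "0 < v" using assms(3) by (simp add: zero_less_iff_neq_zero)
  moreover have "v < top" using assms(2) by (simp add: less_top[symmetric])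
  ultimately have "0 < enn2real v" by (simp add: enn2real_positive_iff)
  hence "- \<alpha>' * enn2real v < - \<alpha> * enn2real v" using assms by (simp add: mult_strict_right_mono)
  thus ?thesis using assms by (simp add: expw_def)
qed

lemma sum_le_rho:
  assumes "finite G" "G \<subseteq> -{0}"
  shows "ennreal (sum (\<lambda>y. expw \<alpha> (V y)) G) \<le> rho V \<alpha>"
proof -
  have "ennreal (sum (\<lambda>y. expw \<alpha> (V y)) G) = (\<Sum>y\<in>G. ennreal (expw \<alpha> (V y)))"
    by (simp add: expw_nn)
  also have "\<dots> = infsum (\<lambda>y. ennreal (expw \<alpha> (V y))) G" using assms by simp
  also have "\<dots> \<le> rho V \<alpha>" unfolding rho_def
  proof (rule infsum_mono_neutral)
    show "(\<lambda>x. ennreal (expw \<alpha> (V x))) summable_on G" by (rule nonneg_summable_on_complete) simp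
    show "(\<lambda>x. ennreal (expw \<alpha> (V x))) summable_on (- {0})" by (rule nonneg_summable_on_complete) simp
  qed (use assms in auto)
  finally show ?thesis .
qed

lemma part1:
  fixes V :: "int^'d \<Rightarrow> ennreal"
  assumes "0 < \<alpha>" "rho V \<alpha> < ennreal rho0"
  shows "beta V \<alpha> < 1"
proof -
  define g where "g = (\<lambda>y. expw \<alpha> (V y))"
  define r where "r = enn2real (rho V \<alpha>)"
  have top: "rho V \<alpha> < top" using assms(2) less_le_trans by fastforce
  have rr: "rho V \<alpha> = ennreal r" using top by (simp add: r_def)
  have r0: "0 \<le> r" by (simp add: r_def)
  have rlt: "r < rho0" using assms(2) rr r0 by (simp add: ennreal_less_iff)
  have r1: "r < 1" using rlt rho0_props by linarith
  have gG: "sum g G \<le> r" if "finite G" "G \<subseteq> -{0}" for G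
    using sum_le_rho[OF that, of \<alpha> V] rr r0 by (simp add: g_def)
  have fr: "fS r < 1"
    using fmono[of r rho0] r0 rlt rho0_props unfolding fS_def by linarith
  have summ: "(\<lambda>\<gamma>. ennreal (real (card (supp \<gamma>)) * cyc_weight V \<alpha> \<gamma>)) summable_on {\<gamma> \<in> cycles. 0 \<in> supp \<gamma>}"
    by (rule nonneg_summable_on_complete) simp
  have "beta V \<alpha> \<le> ennreal (fS r)"
    unfolding beta_def
  proof (rule infsum_le_finite_sums[OF summ])
    fix F :: "(int^'d \<Rightarrow> int^'d) set" assume F: "finite F" "F \<subseteq> {\<gamma> \<in> cycles. 0 \<in> supp \<gamma>}"
    hence FC: "F \<subseteq> C0" by (simp add: C0_def)
    have "(\<Sum>\<gamma>\<in>F. ennreal (real (card (supp \<gamma>)) * cyc_weight V \<alpha> \<gamma>))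
        = ennreal (\<Sum>\<gamma>\<in>F. real (card (supp \<gamma>)) * cyc_weight V \<alpha> \<gamma>)"
      by (rule sum_ennreal) (simp add: cyc_weight_def prod_nonneg expw_nn)
    also have "(\<Sum>\<gamma>\<in>F. real (card (supp \<gamma>)) * cyc_weight V \<alpha> \<gamma>)
        = (\<Sum>\<gamma>\<in>F. real (card (supp \<gamma>)) * (\<Prod>i<card (supp \<gamma>). g (J \<gamma> i)))"
      using FC weight_eq by (intro sum.cong) (auto simp: g_def)
    also have "\<dots> \<le> fS r"
      by (rule finite_bound) (use F FC gG r1 in \<open>auto simp: g_def expw_nn\<close>)
    finally show "(\<Sum>\<gamma>\<in>F. ennreal (real (card (supp \<gamma>)) * cyc_weight V \<alpha> \<gamma>)) \<le> ennreal (fS r)"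
      using ennreal_leI by blast
  qed
  also have "\<dots> < 1" using fr by (metis ennreal_1 ennreal_lessI zero_less_one)
  finally show ?thesis .
qed




lemma rho_lt:
  fixes V :: "int^'d \<Rightarrow> ennreal"
  assumes a: "0 < \<alpha>" "\<alpha> < \<alpha>'" and le: "rho V \<alpha> \<le> ennreal rho0"
  shows "rho V \<alpha>' < ennreal rho0"
proof (cases "\<forall>x\<in>-{0}. V x = \<infinity>")
  case True
  have "rho V \<alpha>' = infsum (\<lambda>_. 0::ennreal) (-{0::int^'d})"
    unfolding rho_def using True by (intro infsum_cong) (simp add: expw_def)
  hence "rho V \<alpha>' = 0" by simp
  thus ?thesis using rho0_props by simp
next
  case False
  then obtain x0 where x0: "x0 \<noteq> 0" "V x0 \<noteq> \<infinity>" by auto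
  define t where "t = (\<lambda>a x. ennreal (expw a (V x)))"
  define A where "A = -{0} - {x0::int^'d}"
  have sm: "t a summable_on B" for a B by (rule nonneg_summable_on_complete) simp
  have dec: "rho V a = t a x0 + infsum (t a) A" for a
  proof -
    have "-{0} = {x0} \<union> A" using x0 by (auto simp: A_def)
    hence "rho V a = infsum (t a) ({x0} \<union> A)" by (simp add: rho_def t_def)
    also have "\<dots> = infsum (t a) {x0} + infsum (t a) A"
      by (rule infsum_Un_disjoint) (auto simp: sm A_def)
    finally show ?thesis by simp
  qed
  have Sle: "infsum (t \<alpha>') A \<le> infsum (t \<alpha>) A"
    by (rule infsum_mono_neutral) (use sm a in \<open>auto simp: t_def intro!: ennreal_leI expw_mono\<close>)
  have SR: "infsum (t \<alpha>) A \<le> rho V \<alpha>" unfolding dec[of \<alpha>] by (rule add_increasing) auto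
  have Sfin: "infsum (t \<alpha>) A \<noteq> \<infinity>"
  proof -
    have "infsum (t \<alpha>) A \<le> ennreal rho0" using SR le by (rule order_trans)
    also have "\<dots> < \<infinity>" by simp
    finally show ?thesis by simp
  qed
  have V0: "V x0 \<noteq> 0"
  proof
    assume "V x0 = 0"
    hence "t \<alpha> x0 = 1" by (simp add: t_def expw_def)
    hence "1 \<le> rho V \<alpha>" unfolding dec[of \<alpha>] by (intro add_increasing2) auto
    hence "1 \<le> ennreal rho0" using le by (rule order_trans)
    hence "1 \<le> rho0" by simp
    thus False using rho0_props by simp
  qed
  have tlt: "t \<alpha>' x0 < t \<alpha> x0"
    unfolding t_def using expw_strict[OF a(2) x0(2) V0]
    by (intro ennreal_lessI) (auto simp: expw_def x0)
  have "rho V \<alpha>' = t \<alpha>' x0 + infsum (t \<alpha>') A" by (rule dec)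
  also have "\<dots> \<le> t \<alpha>' x0 + infsum (t \<alpha>) A" using Sle by (rule add_left_mono)
  also have "\<dots> < t \<alpha> x0 + infsum (t \<alpha>) A"
    using tlt Sfin ennreal_add_left_cancel_less[of "infsum (t \<alpha>) A" "t \<alpha>' x0" "t \<alpha> x0"]
    by (simp add: add.commute)
  also have "\<dots> = rho V \<alpha>" by (rule dec[symmetric])
  finally show ?thesis using le by simp
qed

theorem corollary5p2:
  fixes V :: "int^'d \<Rightarrow> ennreal"
  assumes "strictly_convex_pot V" and "V 0 = 0"
  shows "(\<forall>\<alpha>>0. rho V \<alpha> < ennreal rho0 \<longrightarrow> beta V \<alpha> < 1)
         \<and> alpha_star V \<le> Inf (ereal ` {\<alpha>. 0 < \<alpha> \<and> rho V \<alpha> \<le> ennreal rho0})"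
proof
  show "\<forall>\<alpha>>0. rho V \<alpha> < ennreal rho0 \<longrightarrow> beta V \<alpha> < 1" using part1 by blast
next
  show "alpha_star V \<le> Inf (ereal ` {\<alpha>. 0 < \<alpha> \<and> rho V \<alpha> \<le> ennreal rho0})"
  proof (rule Inf_greatest)
    fix y assume "y \<in> ereal ` {\<alpha>. 0 < \<alpha> \<and> rho V \<alpha> \<le> ennreal rho0}"
    then obtain \<alpha> where al: "y = ereal \<alpha>" "0 < \<alpha>" "rho V \<alpha> \<le> ennreal rho0" by auto
    show "alpha_star V \<le> y"
    proof (rule dense_ge)
      fix z assume z: "y < z"
      show "alpha_star V \<le> z"
      proof (cases z)
        case (real \<alpha>')
        hence "\<alpha> < \<alpha>'" using z al by simp
        hence "rho V \<alpha>' < ennreal rho0" using rho_lt al by blast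
        moreover have "0 < \<alpha>'" using \<open>\<alpha> < \<alpha>'\<close> al by linarith
        ultimately have "beta V \<alpha>' < 1" using part1 by blast
        hence "ereal \<alpha>' \<in> ereal ` {\<alpha>. 0 < \<alpha> \<and> beta V \<alpha> < 1}" using \<open>\<alpha> < \<alpha>'\<close> al by auto
        thus ?thesis unfolding alpha_star_def real by (rule Inf_lower)
      next
        case PInf thus ?thesis by simp
      next
        case MInf thus ?thesis using z by simp
      qed
    qed
  qed
qed


end
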